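(* Let $R=\mathbb{C}[z_1,\dots,z_n]$. Let $f_1,\dots,f_P,g\in R$ be homogeneous polynomials of degree $m$ such that $\{f_1,\dots,f_P,g\}$ is linearly independent over $\mathbb{C}$, and let $I^+=\langle f_1,\dots,f_P\rangle$ and $I^-=\langle g\rangle$. If $I^-_{m+1}\subseteq I^+_{m+1}$, then $n\le 3$ implies $P\ge n$. Moreover, for every $n\ge 4$ there exist such $f_1,\dots,f_P,g$ (linearly independent, homogeneous of a common degree $m$) with $I^-_{m+1}\subseteq I^+_{m+1}$ and $P<n$.
   Context: For a homogeneous ideal $I\subseteq R$, $I_{d}$ denotes its homogeneous component of degree $d$, i.e. the $\mathbb{C}$-vector space of homogeneous polynomials of degree $d$ lying in $I$. *)

theory Defs
  imports Complex_Main "HOL-Library.Poly_Mapping"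
begin

text \<open>Multivariate polynomials over the complex numbers: finitely supported maps from
  exponent vectors (monomials, variable i = z_(i+1)) to coefficients.\<close>
type_synonym mpoly = "(nat \<Rightarrow>\<^sub>0 nat) \<Rightarrow>\<^sub>0 complex"

definition in_ring :: "nat \<Rightarrow> mpoly \<Rightarrow> bool" where
  "in_ring n p \<longleftrightarrow> (\<forall>mon\<in>Poly_Mapping.keys p. Poly_Mapping.keys mon \<subseteq> {..<n})"

definition mon_deg :: "(nat \<Rightarrow>\<^sub>0 nat) \<Rightarrow> nat" where
  "mon_deg mon = (\<Sum>i\<in>Poly_Mapping.keys mon. Poly_Mapping.lookup mon i)"

text \<open>p is homogeneous of degree d (the zero polynomial is homogeneous of every degree).\<close>
definition homogeneous :: "nat \<Rightarrow> mpoly \<Rightarrow> bool" where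
  "homogeneous d p \<longleftrightarrow> (\<forall>mon\<in>Poly_Mapping.keys p. mon_deg mon = d)"

definition smult_mp :: "complex \<Rightarrow> mpoly \<Rightarrow> mpoly" where
  "smult_mp c p = Poly_Mapping.map (\<lambda>x. c * x) p"

definition lin_indep :: "mpoly list \<Rightarrow> bool" where
  "lin_indep xs \<longleftrightarrow>
     (\<forall>c::nat \<Rightarrow> complex. (\<Sum>i<length xs. smult_mp (c i) (xs ! i)) = 0 \<longrightarrow> (\<forall>i<length xs. c i = 0))"

definition ideal_gen :: "nat \<Rightarrow> mpoly list \<Rightarrow> mpoly set" where
  "ideal_gen n fs = {(\<Sum>i<length fs. h i * fs ! i) | h. \<forall>i<length fs. in_ring n (h i)}"

definition hom_comp :: "mpoly set \<Rightarrow> nat \<Rightarrow> mpoly set" where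
  "hom_comp I d = {p \<in> I. homogeneous d p}"

definition admissible :: "nat \<Rightarrow> nat \<Rightarrow> mpoly list \<Rightarrow> mpoly \<Rightarrow> bool" where
  "admissible n m fs g \<longleftrightarrow>
     (\<forall>f\<in>set fs. in_ring n f \<and> homogeneous m f) \<and> in_ring n g \<and> homogeneous m g \<and>
     lin_indep (fs @ [g]) \<and>
     hom_comp (ideal_gen n [g]) (m + 1) \<subseteq> hom_comp (ideal_gen n fs) (m + 1)"

end

theory Submission
  imports Defs "HOL-Computational_Algebra.Polynomial_Factorial" "HOL-Computational_Algebra.Field_as_Ring"
begin


lemma coprime_X_const:
  fixes c :: "'a::{factorial_ring_gcd,semiring_gcd_mult_normalize}"
  assumes "c \<noteq> 0"
  shows "coprime [:0,1:] [:c:]"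
proof (rule coprimeI)
  fix d assume d1: "d dvd [:0,1:]" and d2: "d dvd [:c:]"
  have "degree d \<le> degree [:c:]" using dvd_imp_degree_le[OF d2] assms by simp
  then have "degree d = 0" by simp
  then obtain e where de: "d = [:e:]" by (metis degree_eq_zeroE)
  from d1 obtain q where "[:0,1:] = [:e:] * q" unfolding de by (elim dvdE)
  then have "coeff [:0,1:] 1 = coeff ([:e:] * q) 1" by simp
  then have "1 = e * coeff q 1" by simp
  then have "e dvd 1" by (metis dvdI)
  then show "is_unit d" unfolding de by (simp add: is_unit_const_poly_iff)
qed

lemma core1:
  fixes u v g f a0 a1 :: "'a::{factorial_ring_gcd,semiring_gcd_mult_normalize}"
  assumes cop: "coprime u v" and u: "u \<noteq> 0"
    and e0: "u * g = a0 * f" and e1: "v * g = a1 * f"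
  shows "\<exists>al. g = al * f"
proof (cases "f = 0")
  case True then show ?thesis using e0 u by auto
next
  case False
  have "v * a0 * f = u * a1 * f"
    by (metis e0 e1 mult.assoc mult.left_commute)
  then have "v * a0 = u * a1" using False by simp
  then have "u dvd a0 * v" by (metis dvdI mult.commute)
  then have "u dvd a0" using cop by (simp add: coprime_dvd_mult_left_iff)
  then obtain al where "a0 = u * al" by (elim dvdE)
  then have "u * g = u * (al * f)" using e0 by (simp add: ac_simps)
  then show ?thesis using u by auto
qed

lemma cop_split:
  fixes F1 F2 p q :: "'a::{factorial_ring_gcd,semiring_gcd_mult_normalize}"
  assumes "coprime F2 F1" "F2 \<noteq> 0" "p * F1 = q * F2"
  shows "\<exists>c. p = c * F2 \<and> q = c * F1"
proof -
  have "F2 dvd p * F1" using assms(3) by (metis dvdI mult.commute)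
  then have "F2 dvd p" using assms(1) by (simp add: coprime_dvd_mult_left_iff)
  then obtain c where c: "p = F2 * c" by (elim dvdE)
  then have "F2 * (c * F1) = F2 * q" using assms(3) by (simp add: ac_simps)
  then have "q = c * F1" using assms(2) by simp
  then show ?thesis using c by (auto simp: ac_simps)
qed

definition koszul :: "'a::comm_ring_1 \<Rightarrow> 'a \<Rightarrow> 'a \<Rightarrow> bool" where
  "koszul X Y Z \<longleftrightarrow> (\<forall>c01 c12 c20. Z * c01 + X * c12 + Y * c20 = 0 \<longrightarrow>
      (\<exists>w0 w1 w2. c01 = X * w1 - Y * w0 \<and> c12 = Y * w2 - Z * w1 \<and> c20 = Z * w0 - X * w2))"

lemma core2:
  fixes X Y Z g f1 f2 a0 a1 a2 b0 b1 b2 :: "'a::{factorial_ring_gcd,semiring_gcd_mult_normalize}"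
  assumes cop: "coprime X Y" and X: "X \<noteq> 0" and kos: "koszul X Y Z"
    and e0: "X * g = a0 * f1 + b0 * f2" and e1: "Y * g = a1 * f1 + b1 * f2"
    and e2: "Z * g = a2 * f1 + b2 * f2"
  shows "\<exists>al be. g = al * f1 + be * f2"
proof (cases "f1 = 0 \<or> f2 = 0")
  case True
  then show ?thesis
  proof
    assume "f1 = 0"
    then obtain be where "g = be * f2" using core1[OF cop X, of g b0 f2 b1] e0 e1 by auto
    then show ?thesis using \<open>f1 = 0\<close> by auto
  next
    assume "f2 = 0"
    then obtain al where "g = al * f1" using core1[OF cop X, of g a0 f1 a1] e0 e1 by auto
    then show ?thesis using \<open>f2 = 0\<close> by auto
  qed
next
  case False
  then have f1: "f1 \<noteq> 0" and f2: "f2 \<noteq> 0" by auto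
  define h where "h = gcd f1 f2"
  define F1 where "F1 = f1 div h"
  define F2 where "F2 = f2 div h"
  have h0: "h \<noteq> 0" using f1 unfolding h_def by simp
  have f1h: "f1 = h * F1" unfolding F1_def h_def by simp
  have f2h: "f2 = h * F2" unfolding F2_def h_def by simp
  have F2: "F2 \<noteq> 0" using f2 f2h by auto
  have copF: "coprime F2 F1" unfolding F1_def F2_def h_def
    using div_gcd_coprime[of f1 f2] f1 by (simp add: coprime_commute)
  define v0 where "v0 = a0 * F1 + b0 * F2"
  define v1 where "v1 = a1 * F1 + b1 * F2"
  define v2 where "v2 = a2 * F1 + b2 * F2"
  have g0: "X * g = h * v0" using e0 unfolding v0_def f1h f2h by (simp add: algebra_simps)
  have g1: "Y * g = h * v1" using e1 unfolding v1_def f1h f2h by (simp add: algebra_simps)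
  have g2: "Z * g = h * v2" using e2 unfolding v2_def f1h f2h by (simp add: algebra_simps)
  have "h * (Y * v0) = h * (X * v1)"
    by (metis g0 g1 mult.left_commute)
  then have r01: "Y * v0 = X * v1" using h0 by simp
  have "h * (Z * v0) = h * (X * v2)"
    by (metis g0 g2 mult.left_commute)
  then have r02: "Z * v0 = X * v2" using h0 by simp
  have "X dvd v0 * Y" using r01 by (metis dvdI mult.commute)
  then have "X dvd v0" using cop by (simp add: coprime_dvd_mult_left_iff)
  then obtain G where G: "v0 = X * G" by (elim dvdE)
  have v1G: "v1 = Y * G" using r01 G X by (simp add: ac_simps)
  have v2G: "v2 = Z * G" using r02 G X by (simp add: ac_simps)
  have "X * g = X * (h * G)" using g0 G by (simp add: ac_simps)
  then have gG: "g = h * G" using X by simp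
  have "(Y * a0 - X * a1) * F1 = (X * b1 - Y * b0) * F2"
    using r01 unfolding v0_def v1_def by (simp add: algebra_simps)
  then obtain c01 where c01: "Y * a0 - X * a1 = c01 * F2" "X * b1 - Y * b0 = c01 * F1"
    using cop_split[OF copF F2] by blast
  have "Z * v1 = Y * v2" using v1G v2G by (simp add: ac_simps)
  then have "(Z * a1 - Y * a2) * F1 = (Y * b2 - Z * b1) * F2"
    unfolding v1_def v2_def by (simp add: algebra_simps)
  then obtain c12 where c12: "Z * a1 - Y * a2 = c12 * F2" "Y * b2 - Z * b1 = c12 * F1"
    using cop_split[OF copF F2] by blast
  have "X * v2 = Z * v0" using r02 by simp
  then have "(X * a2 - Z * a0) * F1 = (Z * b0 - X * b2) * F2"
    unfolding v0_def v2_def by (simp add: algebra_simps)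
  then obtain c20 where c20: "X * a2 - Z * a0 = c20 * F2" "Z * b0 - X * b2 = c20 * F1"
    using cop_split[OF copF F2] by blast
  have "Z * (Y * a0 - X * a1) + X * (Z * a1 - Y * a2) + Y * (X * a2 - Z * a0) = 0"
    by (simp add: algebra_simps)
  then have "(Z * c01 + X * c12 + Y * c20) * F2 = 0"
    unfolding c01(1) c12(1) c20(1) by (simp add: algebra_simps)
  then have "Z * c01 + X * c12 + Y * c20 = 0" using F2 by simp
  then obtain w0 w1 w2 where w: "c01 = X * w1 - Y * w0" and "c12 = Y * w2 - Z * w1"
    and "c20 = Z * w0 - X * w2"
    using kos unfolding koszul_def by blast
  have "Y * (a0 + w0 * F2) = X * (a1 + w1 * F2)"
    using c01(1) unfolding w by (simp add: algebra_simps)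
  then have "X dvd (a0 + w0 * F2) * Y" by (metis dvdI mult.commute)
  then have "X dvd (a0 + w0 * F2)" using cop by (simp add: coprime_dvd_mult_left_iff)
  then obtain al where al: "a0 + w0 * F2 = X * al" by (elim dvdE)
  have "Y * (b0 - w0 * F1) = X * (b1 - w1 * F1)"
    using c01(2) unfolding w by (simp add: algebra_simps)
  then have "X dvd (b0 - w0 * F1) * Y" by (metis dvdI mult.commute)
  then have "X dvd (b0 - w0 * F1)" using cop by (simp add: coprime_dvd_mult_left_iff)
  then obtain be where be: "b0 - w0 * F1 = X * be" by (elim dvdE)
  have a0e: "a0 = X * al - w0 * F2" using al by (simp add: algebra_simps)
  have b0e: "b0 = X * be + w0 * F1" using be by (simp add: algebra_simps)
  have "X * G = a0 * F1 + b0 * F2" using G unfolding v0_def by simp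
  also have "\<dots> = X * (al * F1 + be * F2)" unfolding a0e b0e by (simp add: algebra_simps)
  finally have "X * G = X * (al * F1 + be * F2)" .
  then have "G = al * F1 + be * F2" using X by simp
  then have "g = al * f1 + be * f2" using gG f1h f2h by (simp add: algebra_simps)
  then show ?thesis by blast
qed


lemma koszul_poly:
  fixes y z :: "'a::{factorial_ring_gcd,semiring_gcd_mult_normalize}"
  assumes cop: "coprime y z" and y0: "y \<noteq> 0"
  shows "koszul [:0,1:] [:y:] [:z:]"
  unfolding koszul_def
proof (intro allI impI)
  fix c01 c12 c20 :: "'a poly"
  assume H: "[:z:] * c01 + [:0,1:] * c12 + [:y:] * c20 = 0"
  obtain r01 e' where c01: "c01 = pCons r01 e'" by (cases c01)
  obtain r20 e where c20: "c20 = pCons r20 e" by (cases c20)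
  have "pCons (z * r01 + y * r20) (smult z e' + c12 + smult y e) = 0"
    using H unfolding c01 c20 by (simp add: mult_pCons_left algebra_simps)
  then have A: "z * r01 + y * r20 = 0" and B: "smult z e' + c12 + smult y e = 0"
    by (simp_all only: pCons_eq_0_iff)
  have "y dvd r01 * z" using A by (metis add_eq_0_iff dvd_minus_iff dvd_triv_left mult.commute)
  then have "y dvd r01" using cop by (simp add: coprime_dvd_mult_left_iff)
  then obtain k where k: "r01 = y * k" by (elim dvdE)
  have "y * (r20 + z * k) = 0" using A k by (simp add: algebra_simps)
  then have "r20 = - (z * k)"
    using y0 by (simp add: eq_neg_iff_add_eq_0)
  show "\<exists>w0 w1 w2. c01 = [:0,1:] * w1 - [:y:] * w0 \<and> c12 = [:y:] * w2 - [:z:] * w1 \<and>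
           c20 = [:z:] * w0 - [:0,1:] * w2"
  proof (intro exI conjI)
    show "c01 = [:0,1:] * e' - [:y:] * (- [:k:])"
      unfolding c01 k by (simp add: mult_pCons_left)
    show "c12 = [:y:] * (- e) - [:z:] * e'"
      using B by (simp add: algebra_simps eq_neg_iff_add_eq_0)
    show "c20 = [:z:] * (- [:k:]) - [:0,1:] * (- e)"
      unfolding c20 \<open>r20 = - (z * k)\<close> by (simp add: mult_pCons_left)
  qed
qed

type_synonym T = "complex poly poly poly"

definition XT :: T where "XT = [:0,1:]"
definition YT :: T where "YT = [:[:0,1:]:]"
definition ZT :: T where "ZT = [:[:[:0,1:]:]:]"

lemma cop_XY: "coprime XT YT"
  unfolding XT_def YT_def by (rule coprime_X_const) simp

lemma XT_nz: "XT \<noteq> 0" unfolding XT_def by simp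

lemma kos_T: "koszul XT YT ZT"
  unfolding XT_def YT_def ZT_def
  by (rule koszul_poly, rule coprime_X_const) simp_all



definition var :: "nat \<Rightarrow> mpoly" where
  "var k = Poly_Mapping.single (Poly_Mapping.single k 1) 1"

definition liftp :: "('a::comm_ring_1 \<Rightarrow> mpoly) \<Rightarrow> nat \<Rightarrow> 'a poly \<Rightarrow> mpoly" where
  "liftp f k p = poly (map_poly f p) (var k)"

definition homp :: "('a::comm_ring_1 \<Rightarrow> mpoly) \<Rightarrow> bool" where
  "homp f \<longleftrightarrow> f 0 = 0 \<and> f 1 = 1 \<and> (\<forall>x y. f (x+y) = f x + f y) \<and> (\<forall>x y. f (x*y) = f x * f y)"

definition varsin :: "('a \<Rightarrow> mpoly) \<Rightarrow> nat set \<Rightarrow> bool" where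
  "varsin f S \<longleftrightarrow> (\<forall>a. \<forall>mon\<in>Poly_Mapping.keys (f a). Poly_Mapping.keys mon \<subseteq> S)"

definition ontoS :: "('a \<Rightarrow> mpoly) \<Rightarrow> nat set \<Rightarrow> bool" where
  "ontoS f S \<longleftrightarrow> (\<forall>p. (\<forall>mon\<in>Poly_Mapping.keys p. Poly_Mapping.keys mon \<subseteq> S) \<longrightarrow> (\<exists>a. f a = p))"

lemma lookup_single_mult:
  "Poly_Mapping.lookup (Poly_Mapping.single s c * (L::mpoly)) u =
     c * (\<Sum>q. Poly_Mapping.lookup L q when u = s + q)"
  by (simp add: lookup_mult lookup_single when_mult Sum_any_right_distrib mult_when)

lemma L1: "Poly_Mapping.lookup (Poly_Mapping.single s c * (L::mpoly)) (s + t) = c * Poly_Mapping.lookup L t"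
  unfolding lookup_single_mult by simp

lemma L2: "(\<And>t. u \<noteq> s + t) \<Longrightarrow> Poly_Mapping.lookup (Poly_Mapping.single s c * (L::mpoly)) u = 0"
  unfolding lookup_single_mult by simp

lemma map_poly_add_hom: "homp f \<Longrightarrow> map_poly f (p + q) = map_poly f p + map_poly f q"
  by (rule poly_eqI) (simp add: coeff_map_poly homp_def)

lemma map_poly_smult_hom: "homp f \<Longrightarrow> map_poly f (smult a q) = smult (f a) (map_poly f q)"
  by (rule poly_eqI) (simp add: coeff_map_poly homp_def)

lemma map_poly_mult_hom: "homp f \<Longrightarrow> map_poly f (p * q) = map_poly f p * map_poly f q"
proof (induction p)
  case 0 then show ?case by (simp add: homp_def)
next
  case (pCons a p)
  have f0: "f 0 = 0" using pCons.prems by (simp add: homp_def)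
  have "map_poly f (pCons a p * q) = map_poly f (smult a q + pCons 0 (p * q))" by simp
  also have "\<dots> = smult (f a) (map_poly f q) + pCons 0 (map_poly f p * map_poly f q)"
    using pCons by (simp add: map_poly_add_hom map_poly_smult_hom map_poly_pCons f0)
  also have "\<dots> = map_poly f (pCons a p) * map_poly f q"
    by (simp add: map_poly_pCons f0)
  finally show ?case .
qed

lemma homp_lift: assumes "homp f" shows "homp (liftp f k)"
  using assms unfolding homp_def liftp_def
  by (simp add: map_poly_add_hom[OF assms] map_poly_mult_hom[OF assms])

lemma liftp_pCons: "homp f \<Longrightarrow> liftp f k (pCons a p) = f a + var k * liftp f k p"
  by (simp add: liftp_def map_poly_pCons homp_def)

lemma liftp_0: "homp f \<Longrightarrow> liftp f k 0 = 0"
  by (simp add: liftp_def)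

lemma lookup_liftp:
  assumes h: "homp f" and v: "varsin f S" and kS: "k \<notin> S"
    and m0: "Poly_Mapping.lookup m0 k = 0"
  shows "Poly_Mapping.lookup (liftp f k p) (m0 + Poly_Mapping.single k j) =
           Poly_Mapping.lookup (f (coeff p j)) m0"
proof (induction p arbitrary: j)
  case 0 then show ?case using h by (simp add: liftp_0 homp_def)
next
  case (pCons a p)
  have A: "Poly_Mapping.lookup (f a) (m0 + Poly_Mapping.single k j) =
      (if j = 0 then Poly_Mapping.lookup (f a) m0 else 0)"
  proof (cases "j = 0")
    case True then show ?thesis by simp
  next
    case False
    have "k \<in> Poly_Mapping.keys (m0 + Poly_Mapping.single k j)"
      using False by (simp add: in_keys_iff lookup_add)
    then have "m0 + Poly_Mapping.single k j \<notin> Poly_Mapping.keys (f a)"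
      using v kS unfolding varsin_def by blast
    then show ?thesis using False by (simp add: in_keys_iff)
  qed
  have B: "Poly_Mapping.lookup (var k * liftp f k p) (m0 + Poly_Mapping.single k j) =
      (if j = 0 then 0 else Poly_Mapping.lookup (f (coeff p (j - 1))) m0)"
  proof (cases j)
    case 0
    have "\<And>t. m0 + Poly_Mapping.single k j \<noteq> Poly_Mapping.single k 1 + t"
    proof
      fix t assume "m0 + Poly_Mapping.single k j = Poly_Mapping.single k 1 + t"
      then have "Poly_Mapping.lookup (m0 + Poly_Mapping.single k j) k =
                 Poly_Mapping.lookup (Poly_Mapping.single k 1 + t) k" by simp
      then show False using m0 0 by (simp add: lookup_add)
    qed
    then show ?thesis unfolding var_def using 0 by (simp add: L2)
  next
    case (Suc j')
    have "m0 + Poly_Mapping.single k j = Poly_Mapping.single k 1 + (m0 + Poly_Mapping.single k j')"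
      using Suc by (simp add: single_add[symmetric] ac_simps)
    then show ?thesis unfolding var_def using Suc pCons.IH by (simp add: L1)
  qed
  show ?case using A B h by (simp add: liftp_pCons lookup_add coeff_pCons split: nat.splits)
qed

lemma mon_split:
  "(m::nat \<Rightarrow>\<^sub>0 nat) = (m - Poly_Mapping.single k (Poly_Mapping.lookup m k)) +
        Poly_Mapping.single k (Poly_Mapping.lookup m k)"
  "Poly_Mapping.lookup (m - Poly_Mapping.single k (Poly_Mapping.lookup m k)) k = 0"
  by (auto intro!: poly_mapping_eqI simp: lookup_add lookup_minus lookup_single when_def)

lemma keys_mon_split:
  "Poly_Mapping.keys ((m::nat \<Rightarrow>\<^sub>0 nat) - Poly_Mapping.single k (Poly_Mapping.lookup m k))
     \<subseteq> Poly_Mapping.keys m - {k}"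
  by (auto simp: in_keys_iff lookup_minus lookup_single when_def split: if_splits)

lemma liftp_inj:
  assumes h: "homp f" and i: "inj f" and v: "varsin f S" and kS: "k \<notin> S"
  shows "inj (liftp f k)"
proof -
  have z: "p = 0" if "liftp f k p = 0" for p
  proof (rule poly_eqI)
    fix j
    have "f (coeff p j) = 0"
    proof (rule poly_mapping_eqI)
      fix mon
      show "Poly_Mapping.lookup (f (coeff p j)) mon = Poly_Mapping.lookup 0 mon"
      proof (cases "Poly_Mapping.lookup mon k = 0")
        case True
        then show ?thesis using lookup_liftp[OF h v kS True, of p j] that by simp
      next
        case False
        then have "k \<in> Poly_Mapping.keys mon" by (simp add: in_keys_iff)
        then have "mon \<notin> Poly_Mapping.keys (f (coeff p j))" using v kS unfolding varsin_def by blast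
        then show ?thesis by (simp add: in_keys_iff)
      qed
    qed
    then have "f (coeff p j) = f 0" using h by (simp add: homp_def)
    then show "coeff p j = coeff 0 j" using i by (simp add: inj_eq)
  qed
  have hl: "homp (liftp f k)" by (rule homp_lift[OF h])
  show ?thesis
  proof (rule injI)
    fix p q assume "liftp f k p = liftp f k q"
    moreover have "liftp f k (p - q) + liftp f k q = liftp f k p"
      using hl unfolding homp_def by (metis diff_add_cancel)
    ultimately have "liftp f k (p - q) = 0" by simp
    then have "p - q = 0" using z by blast
    then show "p = q" by simp
  qed
qed

lemma liftp_vars:
  assumes h: "homp f" and v: "varsin f S" and kS: "k \<notin> S"
  shows "varsin (liftp f k) (insert k S)"
  unfolding varsin_def
proof (intro allI ballI)
  fix p mon assume "mon \<in> Poly_Mapping.keys (liftp f k p)"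
  then have "Poly_Mapping.lookup (liftp f k p) mon \<noteq> 0" by (simp add: in_keys_iff)
  then have "Poly_Mapping.lookup (f (coeff p (Poly_Mapping.lookup mon k)))
        (mon - Poly_Mapping.single k (Poly_Mapping.lookup mon k)) \<noteq> 0"
    using lookup_liftp[OF h v kS mon_split(2)[of mon k], of p "Poly_Mapping.lookup mon k"] mon_split(1)[of mon k] by metis
  then have "Poly_Mapping.keys (mon - Poly_Mapping.single k (Poly_Mapping.lookup mon k)) \<subseteq> S"
    using v unfolding varsin_def by (simp add: in_keys_iff)
  moreover have "Poly_Mapping.keys mon \<subseteq> Poly_Mapping.keys (mon - Poly_Mapping.single k (Poly_Mapping.lookup mon k)) \<union> {k}"
    by (auto simp: in_keys_iff lookup_minus lookup_single when_def split: if_splits)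
  ultimately show "Poly_Mapping.keys mon \<subseteq> insert k S" by blast
qed

lemma var_pow: "var k ^ j = Poly_Mapping.single (Poly_Mapping.single k j) 1"
proof (induction j)
  case 0 then show ?case by simp
next
  case (Suc j)
  then show ?case by (simp add: var_def mult_single single_add[symmetric])
qed

lemma mpoly_sum_single:
  "(p::mpoly) = (\<Sum>mon\<in>Poly_Mapping.keys p. Poly_Mapping.single mon (Poly_Mapping.lookup p mon))"
proof (rule poly_mapping_eqI)
  fix k
  show "Poly_Mapping.lookup p k = Poly_Mapping.lookup (\<Sum>mon\<in>Poly_Mapping.keys p. Poly_Mapping.single mon (Poly_Mapping.lookup p mon)) k"
    by (simp add: lookup_sum lookup_single when_def in_keys_iff)
qed

lemma image_sum_closed:
  assumes hl: "homp g" and fin: "finite A" and H: "\<forall>x\<in>A. \<exists>q. g q = F x"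
  shows "\<exists>q. g q = (\<Sum>x\<in>A. F x)"
  using fin H
proof (induction A rule: finite_induct)
  case empty then show ?case using hl by (auto simp: homp_def)
next
  case (insert x A)
  then obtain q1 q2 where "g q1 = F x" "g q2 = (\<Sum>x\<in>A. F x)" by auto
  then have "g (q1 + q2) = (\<Sum>x\<in>insert x A. F x)" using hl insert.hyps by (simp add: homp_def)
  then show ?case by blast
qed

lemma liftp_onto:
  assumes h: "homp f" and o: "ontoS f S" and kS: "k \<notin> S"
  shows "ontoS (liftp f k) (insert k S)"
  unfolding ontoS_def
proof (intro allI impI)
  fix p :: mpoly assume P: "\<forall>mon\<in>Poly_Mapping.keys p. Poly_Mapping.keys mon \<subseteq> insert k S"
  have "\<exists>q. liftp f k q = Poly_Mapping.single mon (Poly_Mapping.lookup p mon)"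
    if mon: "mon \<in> Poly_Mapping.keys p" for mon
  proof -
    define m0 where "m0 = mon - Poly_Mapping.single k (Poly_Mapping.lookup mon k)"
    define j where "j = Poly_Mapping.lookup mon k"
    define c where "c = Poly_Mapping.lookup p mon"
    have "Poly_Mapping.keys m0 \<subseteq> S" using keys_mon_split[of mon k] P mon unfolding m0_def by blast
    then have "\<forall>mm\<in>Poly_Mapping.keys (Poly_Mapping.single m0 c). Poly_Mapping.keys mm \<subseteq> S"
      by (simp add: keys_single)
    then obtain a where a: "f a = Poly_Mapping.single m0 c" using o unfolding ontoS_def by blast
    have "liftp f k (monom a j) = f a * var k ^ j"
      using h by (simp add: liftp_def map_poly_monom homp_def poly_monom)
    also have "\<dots> = Poly_Mapping.single (m0 + Poly_Mapping.single k j) c"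
      by (simp add: a var_pow mult_single)
    also have "m0 + Poly_Mapping.single k j = mon" unfolding m0_def j_def using mon_split(1) by metis
    finally show ?thesis unfolding c_def by blast
  qed
  then have "\<exists>q. liftp f k q = (\<Sum>mon\<in>Poly_Mapping.keys p. Poly_Mapping.single mon (Poly_Mapping.lookup p mon))"
    by (intro image_sum_closed[OF homp_lift[OF h]]) auto
  then show "\<exists>q. liftp f k q = p" using mpoly_sum_single[of p] by simp
qed



definition psi0 :: "complex \<Rightarrow> mpoly" where "psi0 c = Poly_Mapping.single 0 c"

lemma homp_psi0: "homp psi0"
  unfolding homp_def psi0_def by (simp add: single_add mult_single)

lemma inj_psi0: "inj psi0"
  unfolding psi0_def by simp

lemma vars_psi0: "varsin psi0 {}"
  unfolding varsin_def psi0_def by (simp add: keys_single)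

lemma keys_empty_mon: "Poly_Mapping.keys (mon::nat \<Rightarrow>\<^sub>0 nat) \<subseteq> {} \<Longrightarrow> mon = 0"
  by (rule poly_mapping_eqI) (auto simp: in_keys_iff)

lemma onto_psi0: "ontoS psi0 {}"
  unfolding ontoS_def psi0_def
proof (intro allI impI)
  fix p :: mpoly assume P: "\<forall>mon\<in>Poly_Mapping.keys p. Poly_Mapping.keys mon \<subseteq> {}"
  have "p = Poly_Mapping.single 0 (Poly_Mapping.lookup p 0)"
  proof (rule poly_mapping_eqI)
    fix k
    show "Poly_Mapping.lookup p k = Poly_Mapping.lookup (Poly_Mapping.single 0 (Poly_Mapping.lookup p 0)) k"
    proof (cases "k = 0")
      case True then show ?thesis by simp
    next
      case False
      then have "k \<notin> Poly_Mapping.keys p" using P keys_empty_mon by blast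
      then show ?thesis using False by (simp add: in_keys_iff lookup_single)
    qed
  qed
  then show "\<exists>a. Poly_Mapping.single 0 a = p" by metis
qed

definition psi3 :: "T \<Rightarrow> mpoly" where
  "psi3 = liftp (liftp (liftp psi0 2) 1) 0"

lemma psi3_props: "homp psi3" "inj psi3" "ontoS psi3 {0,1,2}"
proof -
  have h1: "homp (liftp psi0 2)" by (rule homp_lift[OF homp_psi0])
  have i1: "inj (liftp psi0 2)" by (rule liftp_inj[OF homp_psi0 inj_psi0 vars_psi0]) simp
  have v1: "varsin (liftp psi0 2) {2}" using liftp_vars[OF homp_psi0 vars_psi0, of 2] by simp
  have o1: "ontoS (liftp psi0 2) {2}" using liftp_onto[OF homp_psi0 onto_psi0, of 2] by simp
  have h2: "homp (liftp (liftp psi0 2) 1)" by (rule homp_lift[OF h1])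
  have i2: "inj (liftp (liftp psi0 2) 1)" by (rule liftp_inj[OF h1 i1 v1]) simp
  have v2: "varsin (liftp (liftp psi0 2) 1) {1,2}" using liftp_vars[OF h1 v1, of 1] by simp
  have o2: "ontoS (liftp (liftp psi0 2) 1) {1,2}" using liftp_onto[OF h1 o1, of 1] by simp
  show "homp psi3" unfolding psi3_def by (rule homp_lift[OF h2])
  show "inj psi3" unfolding psi3_def by (rule liftp_inj[OF h2 i2 v2]) simp
  show "ontoS psi3 {0,1,2}" unfolding psi3_def using liftp_onto[OF h2 o2, of 0] by simp
qed

lemma liftp_X: "homp f \<Longrightarrow> liftp f k [:0,1:] = var k"
  by (simp add: liftp_def homp_def map_poly_pCons)

lemma liftp_C: "homp f \<Longrightarrow> liftp f k [:a:] = f a"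
  by (simp add: liftp_def homp_def map_poly_pCons)

lemma psi3_vars: "psi3 XT = var 0" "psi3 YT = var 1" "psi3 ZT = var 2"
proof -
  have h1: "homp (liftp psi0 2)" by (rule homp_lift[OF homp_psi0])
  have h2: "homp (liftp (liftp psi0 2) 1)" by (rule homp_lift[OF h1])
  show "psi3 XT = var 0" unfolding psi3_def XT_def by (rule liftp_X[OF h2])
  show "psi3 YT = var 1" unfolding psi3_def YT_def liftp_C[OF h2] by (rule liftp_X[OF h1])
  show "psi3 ZT = var 2" unfolding psi3_def ZT_def liftp_C[OF h2] liftp_C[OF h1]
    by (rule liftp_X[OF homp_psi0])
qed

lemma psi3_pre: "in_ring 3 p \<Longrightarrow> \<exists>q. psi3 q = p"
proof -
  have e: "{..<3::nat} = {0,1,2}" by auto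
  assume "in_ring 3 p"
  then show ?thesis using psi3_props(3) unfolding ontoS_def in_ring_def e by blast
qed

lemma psi3_add: "psi3 (a + b) = psi3 a + psi3 b"
  and psi3_mult: "psi3 (a * b) = psi3 a * psi3 b"
  and psi3_0: "psi3 0 = 0"
  using psi3_props(1) unfolding homp_def by auto

lemma psi3_eq: "psi3 a = psi3 b \<Longrightarrow> a = b"
  using psi3_props(2) by (simp add: inj_eq)

lemma mcore1:
  assumes "in_ring 3 g" "in_ring 3 f" "in_ring 3 a0" "in_ring 3 a1"
    and e0: "var 0 * g = a0 * f" and e1: "var 1 * g = a1 * f"
  shows "\<exists>al. g = al * f"
proof -
  obtain g' where p1: "psi3 g' = g" using assms(1) psi3_pre by blast
  obtain f' where p2: "psi3 f' = f" using assms(2) psi3_pre by blast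
  obtain a0' where p3: "psi3 a0' = a0" using assms(3) psi3_pre by blast
  obtain a1' where p4: "psi3 a1' = a1" using assms(4) psi3_pre by blast
  note p = p1 p2 p3 p4
  have "XT * g' = a0' * f'" using e0 by (intro psi3_eq) (simp add: psi3_mult psi3_vars p)
  moreover have "YT * g' = a1' * f'" using e1 by (intro psi3_eq) (simp add: psi3_mult psi3_vars p)
  ultimately obtain al where "g' = al * f'" using core1[OF cop_XY XT_nz] by blast
  then have "g = psi3 al * f" using p by (simp add: psi3_mult)
  then show ?thesis by blast
qed

lemma mcore2:
  assumes "in_ring 3 g" "in_ring 3 f1" "in_ring 3 f2" "in_ring 3 a0" "in_ring 3 a1" "in_ring 3 a2"
     "in_ring 3 b0" "in_ring 3 b1" "in_ring 3 b2"
    and e0: "var 0 * g = a0 * f1 + b0 * f2" and e1: "var 1 * g = a1 * f1 + b1 * f2"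
    and e2: "var 2 * g = a2 * f1 + b2 * f2"
  shows "\<exists>al be. g = al * f1 + be * f2"
proof -
  obtain g' where p1: "psi3 g' = g" using assms(1) psi3_pre by blast
  obtain f1' where p2: "psi3 f1' = f1" using assms(2) psi3_pre by blast
  obtain f2' where p3: "psi3 f2' = f2" using assms(3) psi3_pre by blast
  obtain a0' where p4: "psi3 a0' = a0" using assms(4) psi3_pre by blast
  obtain a1' where p5: "psi3 a1' = a1" using assms(5) psi3_pre by blast
  obtain a2' where p6: "psi3 a2' = a2" using assms(6) psi3_pre by blast
  obtain b0' where p7: "psi3 b0' = b0" using assms(7) psi3_pre by blast
  obtain b1' where p8: "psi3 b1' = b1" using assms(8) psi3_pre by blast
  obtain b2' where p9: "psi3 b2' = b2" using assms(9) psi3_pre by blast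
  note p = p1 p2 p3 p4 p5 p6 p7 p8 p9
  have "XT * g' = a0' * f1' + b0' * f2'" using e0 by (intro psi3_eq) (simp add: psi3_mult psi3_add psi3_vars p)
  moreover have "YT * g' = a1' * f1' + b1' * f2'" using e1 by (intro psi3_eq) (simp add: psi3_mult psi3_add psi3_vars p)
  moreover have "ZT * g' = a2' * f1' + b2' * f2'" using e2 by (intro psi3_eq) (simp add: psi3_mult psi3_add psi3_vars p)
  ultimately obtain al be where "g' = al * f1' + be * f2'" using core2[OF cop_XY XT_nz kos_T] by blast
  then have "g = psi3 al * f1 + psi3 be * f2" using p by (simp add: psi3_mult psi3_add)
  then show ?thesis by blast
qed



lemma mon_deg_superset:
  assumes "finite A" "Poly_Mapping.keys a \<subseteq> A"
  shows "mon_deg a = (\<Sum>i\<in>A. Poly_Mapping.lookup a i)"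
  unfolding mon_deg_def using assms
  by (intro sum.mono_neutral_left) (auto simp: in_keys_iff)

lemma mon_deg_add: "mon_deg (a + b) = mon_deg a + mon_deg b"
proof -
  let ?A = "Poly_Mapping.keys a \<union> Poly_Mapping.keys b"
  have "Poly_Mapping.keys (a + b) \<subseteq> ?A" by (rule keys_add)
  then have "mon_deg (a + b) = (\<Sum>i\<in>?A. Poly_Mapping.lookup (a + b) i)"
    by (intro mon_deg_superset) auto
  also have "\<dots> = (\<Sum>i\<in>?A. Poly_Mapping.lookup a i) + (\<Sum>i\<in>?A. Poly_Mapping.lookup b i)"
    by (simp add: lookup_add sum.distrib)
  also have "\<dots> = mon_deg a + mon_deg b"
    by (subst (1 2) mon_deg_superset[of ?A]) auto
  finally show ?thesis .
qed

lemma mon_deg_single: "mon_deg (Poly_Mapping.single i j) = j"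
  unfolding mon_deg_def by (simp add: keys_single)

lemma mon_deg_0_iff: "mon_deg a = 0 \<longleftrightarrow> a = 0"
proof
  assume "mon_deg a = 0"
  then have "\<forall>i\<in>Poly_Mapping.keys a. Poly_Mapping.lookup a i = 0"
    unfolding mon_deg_def by simp
  then show "a = 0" by (intro poly_mapping_eqI) (auto simp: in_keys_iff)
qed (simp add: mon_deg_def)

lemma homog_notin: "homogeneous m f \<Longrightarrow> mon_deg k \<noteq> m \<Longrightarrow> Poly_Mapping.lookup f k = 0"
  unfolding homogeneous_def by (auto simp: in_keys_iff)

lemma comp_lookup:
  assumes hf: "homogeneous m f" and k: "mon_deg k = m"
  shows "Poly_Mapping.lookup (al * f) k = Poly_Mapping.lookup al 0 * Poly_Mapping.lookup f k"
proof -
  have "Poly_Mapping.lookup al l * (\<Sum>q. Poly_Mapping.lookup f q when k = l + q) =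
        (Poly_Mapping.lookup al 0 * Poly_Mapping.lookup f k when l = 0)" for l
  proof (cases "l = 0")
    case True then show ?thesis by simp
  next
    case False
    have "(Poly_Mapping.lookup f q when k = l + q) = 0" for q
    proof (cases "k = l + q")
      case True
      then have "mon_deg k = mon_deg l + mon_deg q" by (simp add: mon_deg_add)
      moreover have "mon_deg l > 0" using False mon_deg_0_iff by auto
      ultimately have "mon_deg q \<noteq> m" using k by simp
      then show ?thesis using homog_notin[OF hf] by simp
    qed simp
    then show ?thesis using False by simp
  qed
  then show ?thesis by (simp add: lookup_mult)
qed

lemma lookup_smult: "Poly_Mapping.lookup (smult_mp c p) k = c * Poly_Mapping.lookup p k"
  unfolding smult_mp_def mult_map_scale_conv_mult using L1[of 0 c p k] by simp

lemma comp_extract: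
  assumes hg: "homogeneous m g" and hf: "\<forall>j<N. homogeneous m (fs ! j)"
    and e: "g = (\<Sum>j<N. A j * fs ! j)"
  shows "g = (\<Sum>j<N. smult_mp (Poly_Mapping.lookup (A j) 0) (fs ! j))"
proof (rule poly_mapping_eqI)
  fix k
  show "Poly_Mapping.lookup g k = Poly_Mapping.lookup (\<Sum>j<N. smult_mp (Poly_Mapping.lookup (A j) 0) (fs ! j)) k"
  proof (cases "mon_deg k = m")
    case True
    have "Poly_Mapping.lookup g k = (\<Sum>j<N. Poly_Mapping.lookup (A j * fs ! j) k)"
      using e by (simp add: lookup_sum)
    also have "\<dots> = (\<Sum>j<N. Poly_Mapping.lookup (A j) 0 * Poly_Mapping.lookup (fs ! j) k)"
      using hf True by (intro sum.cong refl) (simp add: comp_lookup[where m=m])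
    finally show ?thesis by (simp add: lookup_sum lookup_smult)
  next
    case False
    then have "Poly_Mapping.lookup (fs ! j) k = 0" if "j < N" for j using hf that homog_notin by blast
    then show ?thesis using hg False by (simp add: lookup_sum lookup_smult homog_notin)
  qed
qed

lemma smult_mp_conv: "smult_mp c p = Poly_Mapping.single 0 c * p"
  unfolding smult_mp_def by (rule mult_map_scale_conv_mult)

lemma no_comb:
  assumes li: "lin_indep (fs @ [g])" and e: "g = (\<Sum>j<length fs. smult_mp (c j) (fs ! j))"
  shows False
proof -
  define c' where "c' = (\<lambda>j. if j < length fs then c j else -1)"
  have "(\<Sum>i<length (fs @ [g]). smult_mp (c' i) ((fs @ [g]) ! i))
      = (\<Sum>i<length fs. smult_mp (c' i) ((fs @ [g]) ! i)) + smult_mp (c' (length fs)) g"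
    by simp
  also have "(\<Sum>i<length fs. smult_mp (c' i) ((fs @ [g]) ! i)) = g"
    unfolding e c'_def by (intro sum.cong refl) (simp add: nth_append)
  also have "smult_mp (c' (length fs)) g = - g"
    unfolding c'_def smult_mp_conv by (simp add: single_uminus)
  finally have "(\<Sum>i<length (fs @ [g]). smult_mp (c' i) ((fs @ [g]) ! i)) = 0" by simp
  then have "c' (length fs) = 0" using li unfolding lin_indep_def by simp
  then show False unfolding c'_def by simp
qed

lemma keys_var: "Poly_Mapping.keys (var i) = {Poly_Mapping.single i 1}"
  by (simp add: var_def keys_single)

lemma in_ring_var: "i < n \<Longrightarrow> in_ring n (var i)"
  unfolding in_ring_def keys_var by (simp add: keys_single)

lemma homog_var_mult:
  assumes "homogeneous m g" shows "homogeneous (m + 1) (var i * g)"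
  unfolding homogeneous_def
proof
  fix mon assume "mon \<in> Poly_Mapping.keys (var i * g)"
  then have "mon \<in> {a + b |a b. a \<in> Poly_Mapping.keys (var i) \<and> b \<in> Poly_Mapping.keys g}"
    using keys_mult[of "var i" g] by blast
  then obtain b where "b \<in> Poly_Mapping.keys g" "mon = Poly_Mapping.single i 1 + b"
    unfolding keys_var by blast
  then show "mon_deg mon = m + 1" using assms unfolding homogeneous_def
    by (simp add: mon_deg_add mon_deg_single)
qed

lemma zg_in:
  assumes ad: "admissible n m fs g" and i: "i < n"
  shows "\<exists>H. (\<forall>j<length fs. in_ring n (H j)) \<and> var i * g = (\<Sum>j<length fs. H j * fs ! j)"
proof -
  have hg: "homogeneous m g" using ad unfolding admissible_def by blast
  have "var i * g \<in> ideal_gen n [g]"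
    unfolding ideal_gen_def using in_ring_var[OF i]
    by (intro CollectI exI[of _ "\<lambda>_. var i"]) simp
  then have "var i * g \<in> hom_comp (ideal_gen n [g]) (m + 1)"
    unfolding hom_comp_def using homog_var_mult[OF hg] by blast
  then have "var i * g \<in> ideal_gen n fs"
    using ad unfolding admissible_def hom_comp_def by blast
  then show ?thesis unfolding ideal_gen_def by blast
qed

lemma in_ring_mono: "in_ring n p \<Longrightarrow> n \<le> k \<Longrightarrow> in_ring k p"
  unfolding in_ring_def by force

lemma var_nz: "var i \<noteq> 0"
  unfolding var_def by (metis lookup_single_eq lookup_zero zero_neq_one)

lemma part1:
  assumes n3: "n \<le> 3" and ad: "admissible n m fs g"
  shows "length fs \<ge> n"
proof (rule ccontr)
  assume "\<not> length fs \<ge> n"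
  then have lt: "length fs < n" by simp
  have fr: "\<forall>f\<in>set fs. in_ring n f \<and> homogeneous m f" and gr: "in_ring n g" and hg: "homogeneous m g"
    and li: "lin_indep (fs @ [g])"
    using ad unfolding admissible_def by blast+
  have fr3: "\<forall>j<length fs. in_ring 3 (fs ! j)" using fr n3 in_ring_mono nth_mem by blast
  have hf: "\<forall>j<length fs. homogeneous m (fs ! j)" using fr by auto
  have gr3: "in_ring 3 g" using gr n3 in_ring_mono by auto
  have "\<exists>A. g = (\<Sum>j<length fs. A j * fs ! j)"
  proof -
    consider "length fs = 0" | "length fs = 1" | "length fs = 2" using lt n3 by linarith
    then show ?thesis
    proof cases
      case 1
      obtain H where "var 0 * g = (\<Sum>j<length fs. H j * fs ! j)"
        using zg_in[OF ad, of 0] lt by blast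
      then have "var 0 * g = 0" using 1 by simp
      then have "g = 0" using var_nz by simp
      then show ?thesis using 1 by simp
    next
      case 2
      obtain H0 where H0: "\<forall>j<length fs. in_ring n (H0 j)" "var 0 * g = (\<Sum>j<length fs. H0 j * fs ! j)"
        using zg_in[OF ad, of 0] lt by blast
      obtain H1 where H1: "\<forall>j<length fs. in_ring n (H1 j)" "var 1 * g = (\<Sum>j<length fs. H1 j * fs ! j)"
        using zg_in[OF ad, of 1] lt 2 by auto
      have "\<exists>al. g = al * fs ! 0"
        by (rule mcore1[of g "fs ! 0" "H0 0" "H1 0"])
           (use H0 H1 2 gr3 fr3 n3 in \<open>auto intro: in_ring_mono\<close>)
      then obtain al where ge: "g = al * fs ! 0" by blast
      show ?thesis by (rule exI[of _ "\<lambda>_. al"]) (simp add: 2 ge)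
    next
      case 3
      obtain H0 where H0: "\<forall>j<length fs. in_ring n (H0 j)" "var 0 * g = (\<Sum>j<length fs. H0 j * fs ! j)"
        using zg_in[OF ad, of 0] lt by blast
      obtain H1 where H1: "\<forall>j<length fs. in_ring n (H1 j)" "var 1 * g = (\<Sum>j<length fs. H1 j * fs ! j)"
        using zg_in[OF ad, of 1] lt 3 by auto
      obtain H2 where H2: "\<forall>j<length fs. in_ring n (H2 j)" "var 2 * g = (\<Sum>j<length fs. H2 j * fs ! j)"
        using zg_in[OF ad, of 2] lt 3 by auto
      have s2: "(\<Sum>j<length fs. F j) = F 0 + F 1" for F :: "nat \<Rightarrow> mpoly"
        using 3 by (simp add: numeral_2_eq_2)
      have Hr: "in_ring 3 (H0 j) \<and> in_ring 3 (H1 j) \<and> in_ring 3 (H2 j)" if "j < length fs" for j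
        using H0(1) H1(1) H2(1) n3 in_ring_mono that by blast
      have "\<exists>al be. g = al * fs ! 0 + be * fs ! 1"
        by (rule mcore2[of g "fs ! 0" "fs ! 1" "H0 0" "H1 0" "H2 0" "H0 1" "H1 1" "H2 1"])
           (use H0(2) H1(2) H2(2) 3 gr3 fr3 s2 Hr[of 0] Hr[of 1] in auto)
      then obtain al be where ge: "g = al * fs ! 0 + be * fs ! 1" by blast
      show ?thesis by (rule exI[of _ "\<lambda>j. if j = 0 then al else be"]) (simp add: s2 ge)
    qed
  qed
  then obtain A where "g = (\<Sum>j<length fs. A j * fs ! j)" by blast
  then have "g = (\<Sum>j<length fs. smult_mp (Poly_Mapping.lookup (A j) 0) (fs ! j))"
    using comp_extract[OF hg hf] by blast
  then show False using no_comb[OF li, of "\<lambda>j. Poly_Mapping.lookup (A j) 0"] by simp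
qed



definition ee :: "nat \<Rightarrow> (nat \<Rightarrow>\<^sub>0 nat)" where "ee i = Poly_Mapping.single i 1"
definition mnm :: "(nat \<Rightarrow>\<^sub>0 nat) \<Rightarrow> mpoly" where "mnm a = Poly_Mapping.single a 1"

lemma mono_mult [simp]: "mnm a * mnm b = mnm (a + b)"
  unfolding mnm_def by (simp add: mult_single)

lemma var_mono: "var k = mnm (ee k)"
  unfolding var_def mnm_def ee_def by simp

lemma lookup_mono: "Poly_Mapping.lookup (mnm a) b = (if a = b then 1 else 0)"
  unfolding mnm_def by (simp add: lookup_single when_def)

lemma keys_mono: "Poly_Mapping.keys (mnm a) = {a}"
  unfolding mnm_def by (simp add: keys_single)

lemma ee_inj: "ee b = ee d \<Longrightarrow> b = d"
  unfolding ee_def by (drule arg_cong[of _ _ "\<lambda>m. Poly_Mapping.lookup m b"]) (simp add: lookup_single when_def split: if_splits)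

lemma ee_pair: "ee a + ee b = ee c + ee d \<longleftrightarrow> (a = c \<and> b = d) \<or> (a = d \<and> b = c)"
proof
  assume H: "ee a + ee b = ee c + ee d"
  have L: "Poly_Mapping.lookup (ee a + ee b) x = Poly_Mapping.lookup (ee c + ee d) x" for x
    using H by simp
  have "a = c \<or> a = d"
    using L[of a] by (auto simp: ee_def lookup_add lookup_single when_def split: if_splits)
  then show "(a = c \<and> b = d) \<or> (a = d \<and> b = c)"
  proof
    assume "a = c"
    then have "ee b = ee d" using H by simp
    then show ?thesis using \<open>a = c\<close> ee_inj by blast
  next
    assume "a = d"
    then have "ee b = ee c" using H by (simp add: add.commute)
    then show ?thesis using \<open>a = d\<close> ee_inj by blast
  qed
qed (auto simp: add.commute)

lemma mon_deg_ee2: "mon_deg (ee a + ee b) = 2"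
  by (simp add: mon_deg_add ee_def mon_deg_single)

lemma keys_ee2: "Poly_Mapping.keys (ee a + ee b) \<subseteq> {a, b}"
  using keys_add[of "ee a" "ee b"] by (auto simp: ee_def keys_single)

definition quad :: "nat \<Rightarrow> mpoly \<Rightarrow> bool" where
  "quad n p \<longleftrightarrow> (\<forall>mon\<in>Poly_Mapping.keys p. \<exists>a b. a < n \<and> b < n \<and> mon = ee a + ee b)"

lemma quad_props: "quad n p \<Longrightarrow> in_ring n p \<and> homogeneous 2 p"
proof -
  assume q: "quad n p"
  have "in_ring n p" unfolding in_ring_def
  proof
    fix mon assume "mon \<in> Poly_Mapping.keys p"
    then obtain a b where "a < n" "b < n" "mon = ee a + ee b" using q unfolding quad_def by blast
    then show "Poly_Mapping.keys mon \<subseteq> {..<n}" using keys_ee2[of a b] by auto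
  qed
  moreover have "homogeneous 2 p" unfolding homogeneous_def
  proof
    fix mon assume "mon \<in> Poly_Mapping.keys p"
    then obtain a b where "mon = ee a + ee b" using q unfolding quad_def by blast
    then show "mon_deg mon = 2" using mon_deg_ee2 by simp
  qed
  ultimately show ?thesis by blast
qed

lemma quad_mono: "a < n \<Longrightarrow> b < n \<Longrightarrow> quad n (mnm (ee a + ee b))"
  unfolding quad_def keys_mono by blast

lemma quad_add: "quad n p \<Longrightarrow> quad n q \<Longrightarrow> quad n (p + q)"
  unfolding quad_def using keys_add[of p q] by blast

lemma in_ring_add: "in_ring n p \<Longrightarrow> in_ring n q \<Longrightarrow> in_ring n (p + q)"
  unfolding in_ring_def using keys_add[of p q] by blast

lemma in_ring_mult: "in_ring n p \<Longrightarrow> in_ring n q \<Longrightarrow> in_ring n (p * q)"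
  unfolding in_ring_def
proof
  fix mon assume A: "\<forall>mon\<in>Poly_Mapping.keys p. Poly_Mapping.keys mon \<subseteq> {..<n}"
    "\<forall>mon\<in>Poly_Mapping.keys q. Poly_Mapping.keys mon \<subseteq> {..<n}" and "mon \<in> Poly_Mapping.keys (p * q)"
  then obtain a b where "a \<in> Poly_Mapping.keys p" "b \<in> Poly_Mapping.keys q" "mon = a + b"
    using keys_mult[of p q] by blast
  then show "Poly_Mapping.keys mon \<subseteq> {..<n}" using A keys_add[of a b] by blast
qed

lemma in_ring_single: "Poly_Mapping.keys a \<subseteq> {..<n} \<Longrightarrow> in_ring n (Poly_Mapping.single a c)"
  unfolding in_ring_def by (simp add: keys_single)

lemma in_ring_0: "in_ring n 0" unfolding in_ring_def by simp

lemma ig_zero: "0 \<in> ideal_gen n fs"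
  unfolding ideal_gen_def by (intro CollectI exI[of _ "\<lambda>_. 0"]) (simp add: in_ring_0)

lemma ig_gen: assumes "i < length fs" "in_ring n r" shows "r * fs ! i \<in> ideal_gen n fs"
  unfolding ideal_gen_def
proof (intro CollectI exI conjI)
  show "r * fs ! i = (\<Sum>j<length fs. (\<lambda>j. if j = i then r else 0) j * fs ! j)"
    using assms(1) by (simp add: if_distrib[of "\<lambda>x. x * _"] cong: if_cong)
  show "\<forall>j<length fs. in_ring n ((\<lambda>j. if j = i then r else 0) j)"
    using assms(2) in_ring_0 by simp
qed

lemma ig_add: assumes "p \<in> ideal_gen n fs" "q \<in> ideal_gen n fs" shows "p + q \<in> ideal_gen n fs"
proof -
  obtain h where h: "p = (\<Sum>i<length fs. h i * fs ! i)" "\<forall>i<length fs. in_ring n (h i)"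
    using assms(1) unfolding ideal_gen_def by blast
  obtain h' where h': "q = (\<Sum>i<length fs. h' i * fs ! i)" "\<forall>i<length fs. in_ring n (h' i)"
    using assms(2) unfolding ideal_gen_def by blast
  have "p + q = (\<Sum>i<length fs. (\<lambda>i. h i + h' i) i * fs ! i)"
    unfolding h h' by (simp add: sum.distrib distrib_right)
  moreover have "\<forall>i<length fs. in_ring n ((\<lambda>i. h i + h' i) i)" using h(2) h'(2) in_ring_add by simp
  ultimately show ?thesis unfolding ideal_gen_def by (intro CollectI exI[of _ "\<lambda>i. h i + h' i"] conjI) auto
qed

lemma ig_mult: assumes "in_ring n r" "p \<in> ideal_gen n fs" shows "r * p \<in> ideal_gen n fs"
proof -
  obtain h where h: "p = (\<Sum>i<length fs. h i * fs ! i)" "\<forall>i<length fs. in_ring n (h i)"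
    using assms(2) unfolding ideal_gen_def by blast
  have "r * p = (\<Sum>i<length fs. (\<lambda>i. r * h i) i * fs ! i)"
    unfolding h by (simp add: sum_distrib_left mult.assoc)
  moreover have "\<forall>i<length fs. in_ring n ((\<lambda>i. r * h i) i)" using h(2) assms(1) in_ring_mult by simp
  ultimately show ?thesis unfolding ideal_gen_def by (intro CollectI exI[of _ "\<lambda>i. r * h i"] conjI) auto
qed

lemma ig_diff: assumes "p \<in> ideal_gen n fs" "q \<in> ideal_gen n fs" shows "p - q \<in> ideal_gen n fs"
proof -
  have "Poly_Mapping.single 0 (-1) * q \<in> ideal_gen n fs"
    by (rule ig_mult[OF in_ring_single assms(2)]) simp
  moreover have "Poly_Mapping.single 0 (-1) * q = - q"
    by (simp add: single_uminus)
  ultimately have "- q \<in> ideal_gen n fs" by simp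
  from ig_add[OF assms(1) this] show ?thesis by simp
qed

lemma ig_sum: "finite A \<Longrightarrow> (\<forall>x\<in>A. F x \<in> ideal_gen n fs) \<Longrightarrow> sum F A \<in> ideal_gen n fs"
  by (induction A rule: finite_induct) (auto intro: ig_zero ig_add)



definition gex :: mpoly where "gex = mnm (ee 0 + ee 1)"
definition fsex :: "nat \<Rightarrow> mpoly list" where
  "fsex n = [mnm (ee 0 + ee 0), mnm (ee 1 + ee 1), mnm (ee 0 + ee 2) + mnm (ee 1 + ee 3)] @
            map (\<lambda>k. mnm (ee 0 + ee k)) [4..<n]"

lemma len_fsex: "length (fsex n) = n - 1" if "4 \<le> n"
  using that unfolding fsex_def by simp

lemma fsex_nth_big: assumes "4 \<le> n" "3 \<le> j" "j < n - 1"
  shows "fsex n ! j = mnm (ee 0 + ee (j + 1))"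
proof -
  have "fsex n ! j = map (\<lambda>k. mnm (ee 0 + ee k)) [4..<n] ! (j - 3)"
    unfolding fsex_def using assms by (simp add: nth_append numeral_3_eq_3)
  moreover have "[4..<n] ! (j - 3) = j + 1" using assms by (subst nth_upt) auto
  ultimately show ?thesis using assms by simp
qed

lemma vg_in: assumes n: "4 \<le> n" and k: "k < n"
  shows "var k * gex \<in> ideal_gen n (fsex n)"
proof -
  have L: "length (fsex n) = n - 1" using len_fsex[OF n] .
  have f0: "fsex n ! 0 = mnm (ee 0 + ee 0)" and f1: "fsex n ! 1 = mnm (ee 1 + ee 1)"
    and f2: "fsex n ! 2 = mnm (ee 0 + ee 2) + mnm (ee 1 + ee 3)"
    unfolding fsex_def by simp_all
  consider "k = 0" | "k = 1" | "k = 2" | "k = 3" | "4 \<le> k" by linarith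
  then show ?thesis
  proof cases
    case 1
    have "var k * gex = var 1 * fsex n ! 0" unfolding 1 f0 gex_def var_mono by (simp add: ac_simps)
    then show ?thesis using ig_gen[of 0 "fsex n" n "var 1"] in_ring_var[of 1 n] n L by simp
  next
    case 2
    have "var k * gex = var 0 * fsex n ! 1" unfolding 2 f1 gex_def var_mono by (simp add: ac_simps)
    then show ?thesis using ig_gen[of 1 "fsex n" n "var 0"] in_ring_var[of 0 n] n L by simp
  next
    case 3
    have "var k * gex = var 1 * fsex n ! 2 - var 3 * fsex n ! 1"
      unfolding 3 f1 f2 gex_def var_mono by (simp add: distrib_left ac_simps)
    moreover have "var 1 * fsex n ! 2 \<in> ideal_gen n (fsex n)"
      using ig_gen[of 2 "fsex n" n "var 1"] in_ring_var[of 1 n] n L by simp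
    moreover have "var 3 * fsex n ! 1 \<in> ideal_gen n (fsex n)"
      using ig_gen[of 1 "fsex n" n "var 3"] in_ring_var[of 3 n] n L by simp
    ultimately show ?thesis using ig_diff by simp
  next
    case 4
    have "var k * gex = var 0 * fsex n ! 2 - var 2 * fsex n ! 0"
      unfolding 4 f0 f2 gex_def var_mono by (simp add: distrib_left ac_simps)
    moreover have "var 0 * fsex n ! 2 \<in> ideal_gen n (fsex n)"
      using ig_gen[of 2 "fsex n" n "var 0"] in_ring_var[of 0 n] n L by simp
    moreover have "var 2 * fsex n ! 0 \<in> ideal_gen n (fsex n)"
      using ig_gen[of 0 "fsex n" n "var 2"] in_ring_var[of 2 n] n L by simp
    ultimately show ?thesis using ig_diff by simp
  next
    case 5
    have fk: "fsex n ! (k - 1) = mnm (ee 0 + ee k)"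
      using fsex_nth_big[OF n, of "k - 1"] 5 k by simp
    have "var k * gex = var 1 * fsex n ! (k - 1)" unfolding fk gex_def var_mono by (simp add: ac_simps)
    then show ?thesis using ig_gen[of "k - 1" "fsex n" n "var 1"] in_ring_var[of 1 n] n L 5 k by simp
  qed
qed

lemma mon_split1:
  assumes "k \<in> Poly_Mapping.keys (a::nat \<Rightarrow>\<^sub>0 nat)"
  shows "a = (a - ee k) + ee k"
  using assms by (intro poly_mapping_eqI) (auto simp: ee_def lookup_add lookup_minus lookup_single when_def in_keys_iff)

lemma keys_minus_sub: "Poly_Mapping.keys ((a::nat \<Rightarrow>\<^sub>0 nat) - b) \<subseteq> Poly_Mapping.keys a"
  by (auto simp: in_keys_iff lookup_minus)

lemma single_in:
  assumes n: "4 \<le> n" and a: "a \<noteq> 0" "Poly_Mapping.keys a \<subseteq> {..<n}"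
  shows "Poly_Mapping.single a c * gex \<in> ideal_gen n (fsex n)"
proof -
  obtain k where k: "k \<in> Poly_Mapping.keys a" using a(1) by (metis keys_eq_empty ex_in_conv)
  then have kn: "k < n" using a(2) by auto
  have e1: "Poly_Mapping.single a c = Poly_Mapping.single (a - ee k) c * var k"
    unfolding var_def mult_single using mon_split1[OF k] by (simp add: ee_def)
  have eq: "Poly_Mapping.single a c * gex = Poly_Mapping.single (a - ee k) c * (var k * gex)"
    by (subst e1) (simp only: mult.assoc)
  have "in_ring n (Poly_Mapping.single (a - ee k) c)"
    using keys_minus_sub[of a "ee k"] a(2) by (intro in_ring_single) blast
  then show ?thesis unfolding eq using ig_mult vg_in[OF n kn] by blast
qed

lemma incl: assumes n: "4 \<le> n" and p: "p \<in> hom_comp (ideal_gen n [gex]) 3"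
  shows "p \<in> hom_comp (ideal_gen n (fsex n)) 3"
proof -
  obtain h where h: "p = h * gex" "in_ring n h" and hp: "homogeneous 3 p"
    using p unfolding hom_comp_def ideal_gen_def by auto
  have "Poly_Mapping.lookup p (ee 0 + ee 1) = 0"
    using homog_notin[OF hp] mon_deg_ee2 by simp
  moreover have "Poly_Mapping.lookup p ((ee 0 + ee 1) + 0) = Poly_Mapping.lookup h 0"
    unfolding h gex_def mnm_def by (subst mult.commute) (rule L1[of _ 1, simplified])
  ultimately have h0: "Poly_Mapping.lookup h 0 = 0" by simp
  have "p = (\<Sum>a\<in>Poly_Mapping.keys h. Poly_Mapping.single a (Poly_Mapping.lookup h a)) * gex"
    using h(1) mpoly_sum_single[of h] by simp
  also have "\<dots> = (\<Sum>a\<in>Poly_Mapping.keys h. Poly_Mapping.single a (Poly_Mapping.lookup h a) * gex)"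
    by (simp add: sum_distrib_right)
  finally have pe: "p = \<dots>" .
  have "p \<in> ideal_gen n (fsex n)"
    unfolding pe
  proof (rule ig_sum, simp, intro ballI)
    fix a assume a: "a \<in> Poly_Mapping.keys h"
    then have "a \<noteq> 0" using h0 by (auto simp: in_keys_iff)
    moreover have "Poly_Mapping.keys a \<subseteq> {..<n}" using h(2) a unfolding in_ring_def by blast
    ultimately show "Poly_Mapping.single a (Poly_Mapping.lookup h a) * gex \<in> ideal_gen n (fsex n)"
      using single_in[OF n] by blast
  qed
  then show ?thesis using hp unfolding hom_comp_def by blast
qed

definition PP :: "nat \<Rightarrow> nat" where "PP j = (if j = 1 then 1 else 0)"
definition QQ :: "nat \<Rightarrow> nat \<Rightarrow> nat" where
  "QQ n j = (if j = 0 then 0 else if j = 1 then 1 else if j = 2 then 2 else if j < n - 1 then j + 1 else 1)"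
definition WW :: "nat \<Rightarrow> nat \<Rightarrow> (nat \<Rightarrow>\<^sub>0 nat)" where "WW n j = ee (PP j) + ee (QQ n j)"

lemma PP_le: "PP k \<le> QQ n k" by (simp add: PP_def QQ_def)

lemma PP_1: "PP k = 1 \<longleftrightarrow> k = 1" by (simp add: PP_def)

lemma QQ_cases: assumes "k < n" "4 \<le> n"
  shows "(k = 0 \<and> QQ n k = 0) \<or> (k = 1 \<and> QQ n k = 1) \<or> (k = 2 \<and> QQ n k = 2) \<or>
         (3 \<le> k \<and> k < n - 1 \<and> QQ n k = k + 1) \<or> (k = n - 1 \<and> QQ n k = 1)"
  using assms unfolding QQ_def by auto

lemma WW_inj: assumes n: "4 \<le> n" and i: "i < n" and j: "j < n" and e: "WW n i = WW n j" shows "i = j"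
proof -
  from e have "(PP i = PP j \<and> QQ n i = QQ n j) \<or> (PP i = QQ n j \<and> QQ n i = PP j)"
    unfolding WW_def ee_pair .
  then have A: "PP i = PP j" and B: "QQ n i = QQ n j"
    using PP_le[of i n] PP_le[of j n] by auto
  from A have C: "i = 1 \<longleftrightarrow> j = 1" using PP_1 by metis
  show ?thesis using QQ_cases[OF i n] QQ_cases[OF j n] B C by linarith
qed

lemma WW_ne13: assumes "4 \<le> n" "i < n" shows "ee 1 + ee 3 \<noteq> WW n i"
proof
  assume "ee 1 + ee 3 = WW n i"
  then have "(1 = PP i \<and> 3 = QQ n i) \<or> (1 = QQ n i \<and> 3 = PP i)"
    unfolding WW_def ee_pair .
  then show False by (auto simp: PP_def QQ_def split: if_splits)
qed

lemma xs_nth: assumes n: "4 \<le> n" and j: "j < n"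
  shows "(fsex n @ [gex]) ! j = mnm (WW n j) + (if j = 2 then mnm (ee 1 + ee 3) else 0)"
proof -
  have L: "length (fsex n) = n - 1" using len_fsex[OF n] .
  consider "j = 0" | "j = 1" | "j = 2" | "3 \<le> j \<and> j < n - 1" | "j = n - 1" using j by linarith
  then show ?thesis
  proof cases
    case 4
    then show ?thesis using fsex_nth_big[OF n, of j] L
      by (simp add: nth_append WW_def PP_def QQ_def)
  next
    case 5
    then have "j \<noteq> 0" "j \<noteq> 1" "j \<noteq> 2" "\<not> j < n - 1" "j = length (fsex n)" using n L by auto
    then show ?thesis by (simp add: nth_append WW_def PP_def QQ_def gex_def)
  qed (use L n in \<open>auto simp: nth_append WW_def PP_def QQ_def fsex_def\<close>)
qed

lemma lookup_xs: assumes n: "4 \<le> n" and i: "i < n" and j: "j < n"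
  shows "Poly_Mapping.lookup ((fsex n @ [gex]) ! j) (WW n i) = (if j = i then 1 else 0)"
  unfolding xs_nth[OF n j] using WW_inj[OF n j i] WW_ne13[OF n i]
  by (auto simp: lookup_add lookup_mono)

lemma lin_indep_ex: assumes n: "4 \<le> n" shows "lin_indep (fsex n @ [gex])"
  unfolding lin_indep_def
proof (intro allI impI)
  fix c :: "nat \<Rightarrow> complex" and i
  assume S: "(\<Sum>i<length (fsex n @ [gex]). smult_mp (c i) ((fsex n @ [gex]) ! i)) = 0"
    and i: "i < length (fsex n @ [gex])"
  have L: "length (fsex n @ [gex]) = n" using len_fsex[OF n] n by simp
  from S have "(\<Sum>j<n. smult_mp (c j) ((fsex n @ [gex]) ! j)) = 0" unfolding L .
  then have "0 = Poly_Mapping.lookup (\<Sum>j<n. smult_mp (c j) ((fsex n @ [gex]) ! j)) (WW n i)"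
    by simp
  also have "\<dots> = (\<Sum>j<n. c j * (if j = i then 1 else 0))"
    using lookup_xs[OF n] i L by (simp add: lookup_sum lookup_smult)
  also have "\<dots> = c i" using i L by (simp add: if_distrib[of "\<lambda>x. _ * x"] cong: if_cong)
  finally show "c i = 0" by simp
qed

lemma admissible_ex: assumes n: "4 \<le> n" shows "admissible n 2 (fsex n) gex"
proof -
  have qg: "quad n gex" unfolding gex_def using n by (intro quad_mono) auto
  have qf: "\<forall>f\<in>set (fsex n). quad n f"
    unfolding fsex_def using n by (auto intro!: quad_mono quad_add)
  show ?thesis unfolding admissible_def
    using quad_props qg qf lin_indep_ex[OF n] incl[OF n] by auto
qed

lemma part2: "\<forall>n\<ge>4. \<exists>m fs g. admissible n m fs g \<and> length fs < n"
proof (intro allI impI)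
  fix n :: nat assume n: "4 \<le> n"
  have "admissible n 2 (fsex n) gex \<and> length (fsex n) < n"
    using admissible_ex[OF n] len_fsex[OF n] n by simp
  then show "\<exists>m fs g. admissible n m fs g \<and> length fs < n" by blast
qed


theorem theorem2:
  shows "(\<forall>n m fs g. n \<le> 3 \<longrightarrow> admissible n m fs g \<longrightarrow> length fs \<ge> n) \<and>
         (\<forall>n\<ge>4. \<exists>m fs g. admissible n m fs g \<and> length fs < n)"
  using part1 part2 by blast

end
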